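(* Let $\Omega\subset\mathbb{R}^n$ be a bounded Lipschitz domain, $T>0$, $\Omega_T=(0,T]\times\Omega$, $W$ a Hilbert space of measurable functions on $\Omega_T$ continuously embedded in $L^2(0,T;L^2(\Omega))$, $y_0\in L^2(\Omega)$, and $S:L^2(0,T;\mathbb{R}^2)\to W$ a continuous affine map with $\|S(u)\|_W\le C(\|u\|_{L^2(0,T;\mathbb{R}^2)}+\|y_0\|_{L^2(\Omega)})$ for a constant $C$ independent of $u,y_0$; let $S_0$ be its linear part (the map $S$ with $y_0=0$) and $\|S_0\|$ its operator norm from $L^2(0,T;\mathbb{R}^2)$ to $L^2(0,T;L^2(\omega_{\mathrm{obs}}))$, where $\omega_{\mathrm{obs}}\subset\Omega$. Let $y^d\in L^2(0,T;L^2(\omega_{\mathrm{obs}}))$, $\alpha>0$, and let $\mathcal{U}$ be the space of $\mathbb{R}^2$-valued functions on $[0,T]$ that are piecewise constant on a given grid $0=t_1<\dots<t_M=T$. Let $\beta>\|S_0\|^2+\alpha$ and let $\bar u\in\mathcal{U}$ be a local minimizer over $\mathcal{U}$ of $$J_\beta(u)=\frac12\|Su-y^d\|^2_{L^2(0,T;L^2(\omega_{\mathrm{obs}}))}+\frac\alpha2\|u\|^2_{L^2(0,T;\mathbb{R}^2)}+\beta\int_0^T|u_1(t)u_2(t)|\,dt.$$ Then $\bar u_1(t)\bar u_2(t)=0$ for all $t\in[0,T]$.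
   Context: $Su=S(u)$ is the state for control $u=(u_1,u_2)$, restricted to $(0,T)\times\omega_{\mathrm{obs}}$ in the tracking term. Piecewise constant means constant on each interval $(t_j,t_{j+1}]$. *)

theory Defs
  imports "HOL-Analysis.Analysis"
begin

definition L2ctrl :: "real \<Rightarrow> (real \<Rightarrow> real \<times> real) set" where
  "L2ctrl T = {u. u \<in> borel_measurable lborel \<and>
                  set_integrable lborel {0..T} (\<lambda>t. (norm (u t))\<^sup>2)}"

definition ctrl_norm :: "real \<Rightarrow> (real \<Rightarrow> real \<times> real) \<Rightarrow> real" where
  "ctrl_norm T u = sqrt (LINT t:{0..T}|lborel. (norm (u t))\<^sup>2)"

definition obs_set :: "real \<Rightarrow> (real^'n::finite) set \<Rightarrow> (real \<times> (real^'n)) set" where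
  "obs_set T \<omega> = {0<..<T} \<times> \<omega>"

definition L2obs :: "real \<Rightarrow> (real^'n::finite) set \<Rightarrow> (real \<times> (real^'n) \<Rightarrow> real) set" where
  "L2obs T \<omega> = {y. y \<in> borel_measurable lborel \<and>
                    set_integrable lborel (obs_set T \<omega>) (\<lambda>z. (y z)\<^sup>2)}"

definition obs_norm :: "real \<Rightarrow> (real^'n::finite) set \<Rightarrow> (real \<times> (real^'n) \<Rightarrow> real) \<Rightarrow> real" where
  "obs_norm T \<omega> y = sqrt (LINT z:obs_set T \<omega>|lborel. (y z)\<^sup>2)"

definition lin_part :: "((real \<Rightarrow> real \<times> real) \<Rightarrow> (real \<times> (real^'n::finite) \<Rightarrow> real))
     \<Rightarrow> (real \<Rightarrow> real \<times> real) \<Rightarrow> (real \<times> (real^'n) \<Rightarrow> real)" where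
  "lin_part S u = (\<lambda>z. S u z - S (\<lambda>_. 0) z)"

definition op_norm :: "real \<Rightarrow> (real^'n::finite) set
     \<Rightarrow> ((real \<Rightarrow> real \<times> real) \<Rightarrow> (real \<times> (real^'n) \<Rightarrow> real)) \<Rightarrow> real" where
  "op_norm T \<omega> S0 = Sup {obs_norm T \<omega> (S0 u) / ctrl_norm T u | u. u \<in> L2ctrl T \<and> ctrl_norm T u \<noteq> 0}"

definition pwc :: "(nat \<Rightarrow> real) \<Rightarrow> nat \<Rightarrow> (real \<Rightarrow> real \<times> real) set" where
  "pwc tg M = {u. \<exists>c :: nat \<Rightarrow> real \<times> real.
      u = (\<lambda>t. \<Sum>j\<in>{1..<M}. indicator {tg j<..tg (Suc j)} t *\<^sub>R c j)}"

definition J_beta :: "real \<Rightarrow> (real^'n::finite) set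
     \<Rightarrow> ((real \<Rightarrow> real \<times> real) \<Rightarrow> (real \<times> (real^'n) \<Rightarrow> real)) \<Rightarrow> (real \<times> (real^'n) \<Rightarrow> real)
     \<Rightarrow> real \<Rightarrow> real \<Rightarrow> (real \<Rightarrow> real \<times> real) \<Rightarrow> real" where
  "J_beta T \<omega> S yd \<alpha> \<beta> u =
     1/2 * (obs_norm T \<omega> (\<lambda>z. S u z - yd z))\<^sup>2
     + \<alpha>/2 * (ctrl_norm T u)\<^sup>2
     + \<beta> * (LINT t:{0..T}|lborel. \<bar>fst (u t) * snd (u t)\<bar>)"

definition local_min_on :: "real \<Rightarrow> ((real \<Rightarrow> real \<times> real) \<Rightarrow> real) \<Rightarrow> (real \<Rightarrow> real \<times> real) set
     \<Rightarrow> (real \<Rightarrow> real \<times> real) \<Rightarrow> bool" where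
  "local_min_on T F A x \<longleftrightarrow> x \<in> A \<and>
     (\<exists>\<epsilon>>0. \<forall>u\<in>A. ctrl_norm T (\<lambda>t. u t - x t) < \<epsilon> \<longrightarrow> F x \<le> F u)"

end

theory Submission
  imports Defs
begin


lemma bdd_set_int:
  fixes f :: "real \<Rightarrow> real"
  assumes "f \<in> borel_measurable lborel" "\<And>t. \<bar>f t\<bar> \<le> B"
  shows "set_integrable lborel {a..b} f"
proof (rule set_integrable_bound[where f="\<lambda>_. B"])
  show "set_integrable lborel {a..b} (\<lambda>_. B)"
    by (auto simp: set_integrable_def intro!: integrable_real_indicator emeasure_bounded_finite)
  show "set_borel_measurable lborel {a..b} f" using assms(1)
    by (simp add: set_borel_measurable_def)
  show "AE x in lborel. x \<in> {a..b} \<longrightarrow> norm (f x) \<le> norm B"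
    using assms(2) by (auto intro!: AE_I2 order_trans[OF _ abs_ge_self])
qed

lemma obs_meas: "(\<omega>::(real^'n::finite) set) \<in> sets lborel \<Longrightarrow> obs_set T \<omega> \<in> sets lborel"
  unfolding obs_set_def
  by (metis borel_prod pair_measureI sets_lborel sets_lborel borel_open open_greaterThanLessThan)

lemma sq_ineq: "((x::real) - y) * (x - y) \<le> 2 * (x * x) + 2 * (y * y)"
proof -
  have "0 \<le> (x+y)*(x+y)" by simp
  then show ?thesis by (simp add: algebra_simps)
qed

lemma L2obs_diff:
  assumes "f \<in> L2obs T \<omega>" "g \<in> L2obs T \<omega>" "\<omega> \<in> sets lborel"
  shows "set_integrable lborel (obs_set T \<omega>) (\<lambda>z. (f z - g z)\<^sup>2)"
proof (rule set_integrable_bound[where f="\<lambda>z. 2*(f z)\<^sup>2 + 2*(g z)\<^sup>2"])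
  show "set_integrable lborel (obs_set T \<omega>) (\<lambda>z. 2*(f z)\<^sup>2 + 2*(g z)\<^sup>2)"
    using assms unfolding L2obs_def by auto
  have [measurable]: "obs_set T \<omega> \<in> sets lborel" using obs_meas assms(3) .
  show "set_borel_measurable lborel (obs_set T \<omega>) (\<lambda>z. (f z - g z)\<^sup>2)"
    using assms unfolding L2obs_def set_borel_measurable_def
    by (auto intro!: borel_measurable_scaleR borel_measurable_power borel_measurable_diff borel_measurable_indicator)
  show "AE x in lborel. x \<in> obs_set T \<omega> \<longrightarrow> norm ((f x - g x)\<^sup>2) \<le> norm (2*(f x)\<^sup>2 + 2*(g x)\<^sup>2)"
    by (auto intro!: AE_I2 simp: power2_eq_square) (rule sq_ineq)
qed

lemma pwc_meas: assumes "u \<in> pwc tg M" shows "u \<in> borel_measurable lborel"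
proof -
  obtain c where c: "u = (\<lambda>t. \<Sum>j\<in>{1..<M}. indicator {tg j<..tg (Suc j)} t *\<^sub>R c j)"
    using assms unfolding pwc_def by auto
  show ?thesis unfolding c
    by (intro borel_measurable_sum borel_measurable_scaleR borel_measurable_indicator borel_measurable_const) simp
qed

lemma pwc_bdd: assumes "u \<in> pwc tg M" shows "\<exists>B. \<forall>t. norm (u t) \<le> B"
proof -
  obtain c where c: "u = (\<lambda>t. \<Sum>j\<in>{1..<M}. indicator {tg j<..tg (Suc j)} t *\<^sub>R c j)"
    using assms unfolding pwc_def by auto
  have "norm (u t) \<le> (\<Sum>j\<in>{1..<M}. norm (c j))" for t
    unfolding c
    by (rule order_trans[OF norm_sum sum_mono]) (auto simp: indicator_def)
  then show ?thesis by blast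
qed

lemma pwc_int:
  assumes "u \<in> pwc tg M"
  shows "set_integrable lborel {0..T} (\<lambda>t. (norm (u t))\<^sup>2)"
    "set_integrable lborel {0..T} (\<lambda>t. \<bar>fst (u t) * snd (u t)\<bar>)"
proof -
  obtain B where B: "\<And>t. norm (u t) \<le> B" using pwc_bdd[OF assms] by blast
  have m: "u \<in> borel_measurable lborel" using pwc_meas[OF assms] .
  show "set_integrable lborel {0..T} (\<lambda>t. (norm (u t))\<^sup>2)"
  proof (rule bdd_set_int[where B="B^2"])
    show "(\<lambda>t. (norm (u t))\<^sup>2) \<in> borel_measurable lborel" using m by measurable
    show "\<bar>(norm (u t))\<^sup>2\<bar> \<le> B\<^sup>2" for t using B[of t] by (simp add: power_mono)
  qed
  show "set_integrable lborel {0..T} (\<lambda>t. \<bar>fst (u t) * snd (u t)\<bar>)"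
  proof (rule bdd_set_int[where B="B*B"])
    show "(\<lambda>t. \<bar>fst (u t) * snd (u t)\<bar>) \<in> borel_measurable lborel"
      by (rule measurable_compose[OF m borel_measurable_continuous_onI]) (intro continuous_intros)
    show "\<bar>\<bar>fst (u t) * snd (u t)\<bar>\<bar> \<le> B * B" for t
    proof -
      have "\<bar>fst (u t)\<bar> \<le> B" "\<bar>snd (u t)\<bar> \<le> B"
        using B[of t] norm_fst_le[of "fst (u t)" "snd (u t)"] norm_snd_le[of "snd (u t)" "fst (u t)"] by auto
      then show ?thesis by (simp add: abs_mult mult_mono')
    qed
  qed
qed

lemma pwc_L2: "u \<in> pwc tg M \<Longrightarrow> u \<in> L2ctrl T"
  unfolding L2ctrl_def using pwc_meas pwc_int by blast

lemma pwc_lin: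
  assumes "u \<in> pwc tg M" "v \<in> pwc tg M"
  shows "(\<lambda>t. a *\<^sub>R u t + b *\<^sub>R v t) \<in> pwc tg M"
proof -
  obtain c where c: "u = (\<lambda>t. \<Sum>j\<in>{1..<M}. indicator {tg j<..tg (Suc j)} t *\<^sub>R c j)"
    using assms unfolding pwc_def by auto
  obtain d where d: "v = (\<lambda>t. \<Sum>j\<in>{1..<M}. indicator {tg j<..tg (Suc j)} t *\<^sub>R d j)"
    using assms unfolding pwc_def by auto
  have "(\<lambda>t. a *\<^sub>R u t + b *\<^sub>R v t) = (\<lambda>t. \<Sum>j\<in>{1..<M}. indicator {tg j<..tg (Suc j)} t *\<^sub>R (a *\<^sub>R c j + b *\<^sub>R d j))"
    unfolding c d by (simp only: scaleR_sum_right scaleR_add_right sum.distrib scaleR_scaleR mult.commute)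
  then show ?thesis unfolding pwc_def mem_Collect_eq by (rule exI[where x="\<lambda>j. a *\<^sub>R c j + b *\<^sub>R d j"])
qed

lemma pwc_ind:
  assumes "j \<in> {1..<M}"
  shows "(\<lambda>t. indicator {tg j<..tg (Suc j)} t *\<^sub>R e) \<in> pwc tg M"
proof -
  have "(\<lambda>t. indicator {tg j<..tg (Suc j)} t *\<^sub>R e) = (\<lambda>t. \<Sum>i\<in>{1..<M}. indicator {tg i<..tg (Suc i)} t *\<^sub>R (if i = j then e else 0))"
  proof
    fix t
    have "(\<Sum>i\<in>{1..<M}. indicator {tg i<..tg (Suc i)} t *\<^sub>R (if i = j then e else 0))
        = (\<Sum>i\<in>{1..<M}. if i = j then indicator {tg i<..tg (Suc i)} t *\<^sub>R e else 0)"
      by (rule sum.cong) auto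
    also have "\<dots> = indicator {tg j<..tg (Suc j)} t *\<^sub>R e"
      using assms by (subst sum.delta) auto
    finally show "indicator {tg j<..tg (Suc j)} t *\<^sub>R e = (\<Sum>i\<in>{1..<M}. indicator {tg i<..tg (Suc i)} t *\<^sub>R (if i = j then e else 0))" by simp
  qed
  then show ?thesis unfolding pwc_def mem_Collect_eq by (rule exI[where x="\<lambda>i. if i = j then e else 0"])
qed

lemma tg_mono_aux:
  fixes tg :: "nat \<Rightarrow> real"
  assumes mono: "\<And>j. 1 \<le> j \<Longrightarrow> j < M \<Longrightarrow> tg j < tg (Suc j)" and i: "1 \<le> i"
  shows "i + d \<le> M \<Longrightarrow> tg i \<le> tg (i + d)"
proof (induction d)
  case 0 then show ?case by simp
next
  case (Suc d)
  then have "tg i \<le> tg (i+d)" by simp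
  moreover have "tg (i+d) < tg (Suc (i+d))" using i Suc.prems by (intro mono) auto
  ultimately show ?case by simp
qed

lemma tg_mono:
  fixes tg :: "nat \<Rightarrow> real"
  assumes mono: "\<And>j. 1 \<le> j \<Longrightarrow> j < M \<Longrightarrow> tg j < tg (Suc j)"
    and "1 \<le> i" "i \<le> k" "k \<le> M"
  shows "tg i \<le> tg k"
  using tg_mono_aux[of M tg i "k - i", OF mono assms(2)] assms by auto

lemma tg_disj:
  fixes tg :: "nat \<Rightarrow> real"
  assumes "\<And>j. 1 \<le> j \<Longrightarrow> j < M \<Longrightarrow> tg j < tg (Suc j)"
    and "i \<in> {1..<M}" "j \<in> {1..<M}" "t \<in> {tg i<..tg (Suc i)}" "t \<in> {tg j<..tg (Suc j)}"
  shows "i = (j::nat)"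
proof (rule ccontr)
  assume "i \<noteq> j"
  then consider "i < j" | "j < i" by linarith
  then show False
  proof cases
    case 1
    then have "tg (Suc i) \<le> tg j" using tg_mono[of M tg "Suc i" j] assms(1,2,3) by auto
    then show False using assms(4,5) by auto
  next
    case 2
    then have "tg (Suc j) \<le> tg i" using tg_mono[of M tg "Suc j" i] assms(1,2,3) by auto
    then show False using assms(4,5) by auto
  qed
qed

lemma tg_find:
  fixes tg :: "nat \<Rightarrow> real"
  assumes "\<And>j. 1 \<le> j \<Longrightarrow> j < M \<Longrightarrow> tg j < tg (Suc j)" "M \<ge> 2" "tg 1 = 0" "tg M = T"
    and "t \<in> {0<..T}"
  shows "\<exists>j\<in>{1..<M}. t \<in> {tg j<..tg (Suc j)}"
proof -
  define A where "A = {i\<in>{1..<M}. tg i < t}"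
  have "1 \<in> A" using assms unfolding A_def by auto
  moreover have "finite A" unfolding A_def by auto
  ultimately have jA: "Max A \<in> A" and jmax: "\<And>i. i \<in> A \<Longrightarrow> i \<le> Max A"
    using Max_in[of A] Max_ge[of A] by blast+
  define j where "j = Max A"
  have "t \<le> tg (Suc j)"
  proof (cases "Suc j < M")
    case True
    then have "Suc j \<notin> A" using jmax[of "Suc j"] unfolding j_def by auto
    then show ?thesis using True unfolding A_def by auto
  next
    case False
    then have "Suc j = M" using jA unfolding A_def j_def by auto
    then show ?thesis using assms by auto
  qed
  then show ?thesis using jA unfolding A_def j_def by auto
qed

lemma pwc_val:
  fixes tg :: "nat \<Rightarrow> real" and c :: "nat \<Rightarrow> real \<times> real"
  assumes mono: "\<And>j. 1 \<le> j \<Longrightarrow> j < M \<Longrightarrow> tg j < tg (Suc j)"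
    and u: "u = (\<lambda>t. \<Sum>j\<in>{1..<M}. indicator {tg j<..tg (Suc j)} t *\<^sub>R c j)"
    and j: "j \<in> {1..<M}" and t: "t \<in> {tg j<..tg (Suc j)}"
  shows "u t = c j"
proof -
  have eq: "indicator {tg i<..tg (Suc i)} t *\<^sub>R c i = (if i = j then c j else 0)"
    if i: "i \<in> {1..<M}" for i
  proof (cases "i = j")
    case True
    then show ?thesis using t by simp
  next
    case False
    have "t \<notin> {tg i<..tg (Suc i)}"
    proof
      assume "t \<in> {tg i<..tg (Suc i)}"
      then have "i = j" using tg_disj[of M tg i j t] mono i j t by blast
      then show False using False by simp
    qed
    then show ?thesis using False by simp
  qed
  have "u t = (\<Sum>i\<in>{1..<M}. if i = j then c j else 0)"
    unfolding u using eq by (intro sum.cong) auto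
  also have "\<dots> = c j" using j by simp
  finally show ?thesis .
qed

lemma pwc_zero:
  fixes tg :: "nat \<Rightarrow> real"
  assumes mono: "\<And>j. 1 \<le> j \<Longrightarrow> j < M \<Longrightarrow> tg j < tg (Suc j)" and t1: "tg 1 = 0" and u: "u \<in> pwc tg M"
  shows "u 0 = 0"
proof -
  obtain c where c: "u = (\<lambda>t. \<Sum>j\<in>{1..<M}. indicator {tg j<..tg (Suc j)} t *\<^sub>R c j)"
    using u unfolding pwc_def by blast
  have z: "indicator {tg j<..tg (Suc j)} (0::real) *\<^sub>R c j = 0" if j: "j \<in> {1..<M}" for j
  proof -
    have "tg 1 \<le> tg j" using tg_mono[of M tg 1 j] mono j by auto
    then have "(0::real) \<notin> {tg j<..tg (Suc j)}" using t1 by auto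
    then show ?thesis by simp
  qed
  show ?thesis unfolding c using z by (intro sum.neutral) blast
qed

lemma pen_alg:
  fixes a b s :: real
  assumes "a * b \<noteq> 0" "0 < s" "s < \<bar>a\<bar>" "s < \<bar>b\<bar>"
  shows "\<bar>(a + s) * (b - sgn (a*b) * s)\<bar> + \<bar>(a - s) * (b + sgn (a*b) * s)\<bar> = 2 * \<bar>a * b\<bar> - 2 * s\<^sup>2"
proof -
  consider "a > 0" "b > 0" | "a > 0" "b < 0" | "a < 0" "b > 0" | "a < 0" "b < 0"
    using assms(1) by (metis linorder_neqE_linordered_idom mult_zero_left mult_zero_right)
  then show ?thesis
  proof cases
    case 1
    then have sg: "sgn (a*b) = 1" by simp
    have p1: "(a+s)*(b-s) > 0" using 1 assms by auto
    have p2: "(a-s)*(b+s) > 0" using 1 assms by auto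
    have e3: "\<bar>a*b\<bar> = a*b" using 1 by simp
    have "\<bar>(a + s) * (b - sgn (a*b) * s)\<bar> = (a+s)*(b-s)" using p1 sg by simp
    moreover have "\<bar>(a - s) * (b + sgn (a*b) * s)\<bar> = (a-s)*(b+s)" using p2 sg by simp
    ultimately show ?thesis unfolding e3 by (simp add: power2_eq_square algebra_simps)
  next
    case 2
    then have ab: "a*b < 0" by (simp add: mult_pos_neg)
    then have sg: "sgn (a*b) = -1" by simp
    have p1: "(a+s)*(b+s) < 0" using 2 assms by (auto intro: mult_pos_neg)
    have p2: "(a-s)*(b-s) < 0" using 2 assms by (auto intro: mult_pos_neg)
    have e3: "\<bar>a*b\<bar> = - (a*b)" using ab by simp
    have "\<bar>(a + s) * (b - sgn (a*b) * s)\<bar> = - ((a+s)*(b+s))" using p1 sg by simp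
    moreover have "\<bar>(a - s) * (b + sgn (a*b) * s)\<bar> = - ((a-s)*(b-s))" using p2 sg by simp
    ultimately show ?thesis unfolding e3 by (simp add: power2_eq_square algebra_simps)
  next
    case 3
    then have ab: "a*b < 0" by (simp add: mult_neg_pos)
    then have sg: "sgn (a*b) = -1" by simp
    have p1: "(a+s)*(b+s) < 0" using 3 assms by (auto intro: mult_neg_pos)
    have p2: "(a-s)*(b-s) < 0" using 3 assms by (auto intro: mult_neg_pos)
    have e3: "\<bar>a*b\<bar> = - (a*b)" using ab by simp
    have "\<bar>(a + s) * (b - sgn (a*b) * s)\<bar> = - ((a+s)*(b+s))" using p1 sg by simp
    moreover have "\<bar>(a - s) * (b + sgn (a*b) * s)\<bar> = - ((a-s)*(b-s))" using p2 sg by simp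
    ultimately show ?thesis unfolding e3 by (simp add: power2_eq_square algebra_simps)
  next
    case 4
    then have ab: "a*b > 0" by (simp add: mult_neg_neg)
    then have sg: "sgn (a*b) = 1" by simp
    have p1: "(a+s)*(b-s) > 0" using 4 assms by (auto intro: mult_neg_neg)
    have p2: "(a-s)*(b+s) > 0" using 4 assms by (auto intro: mult_neg_neg)
    have e3: "\<bar>a*b\<bar> = a*b" using ab by simp
    have "\<bar>(a + s) * (b - sgn (a*b) * s)\<bar> = (a+s)*(b-s)" using p1 sg by simp
    moreover have "\<bar>(a - s) * (b + sgn (a*b) * s)\<bar> = (a-s)*(b+s)" using p2 sg by simp
    ultimately show ?thesis unfolding e3 by (simp add: power2_eq_square algebra_simps)
  qed
qed

lemma norm_par:
  fixes x y :: "real \<times> real"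
  shows "(norm (x + s *\<^sub>R y))\<^sup>2 + (norm (x - s *\<^sub>R y))\<^sup>2 = 2 * (norm x)\<^sup>2 + 2 * s\<^sup>2 * (norm y)\<^sup>2"
  by (simp only: power2_norm_eq_inner) (simp add: inner_add_left inner_add_right inner_diff_left inner_diff_right
      inner_commute algebra_simps power2_eq_square)

lemma pwc_lin':
  assumes "u \<in> pwc tg M" "v \<in> pwc tg M" "\<And>t. f t = a *\<^sub>R u t + b *\<^sub>R v t"
  shows "f \<in> pwc tg M"
proof -
  have "f = (\<lambda>t. a *\<^sub>R u t + b *\<^sub>R v t)" using assms(3) by (rule ext)
  then show ?thesis using pwc_lin[OF assms(1,2)] by simp
qed

lemma sq_set_int_nonneg:
  fixes f :: "'a \<Rightarrow> real"
  shows "0 \<le> (LINT x:A|M. (f x)\<^sup>2)"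
  unfolding set_lebesgue_integral_def by (rule Bochner_Integration.integral_nonneg) (simp add: indicator_def)

lemma cn_sq: "(ctrl_norm T u)\<^sup>2 = (LINT t:{0..T}|lborel. (norm (u t))\<^sup>2)"
  unfolding ctrl_norm_def by (rule real_sqrt_pow2[OF sq_set_int_nonneg])

lemma cn_nonneg: "0 \<le> ctrl_norm T u"
  unfolding ctrl_norm_def by (rule real_sqrt_ge_zero[OF sq_set_int_nonneg])

lemma on_sq: "(obs_norm T \<omega> f)\<^sup>2 = (LINT z:obs_set T \<omega>|lborel. (f z)\<^sup>2)"
  unfolding obs_norm_def by (rule real_sqrt_pow2[OF sq_set_int_nonneg])

lemma on_nonneg: "0 \<le> obs_norm T \<omega> f"
  unfolding obs_norm_def by (rule real_sqrt_ge_zero[OF sq_set_int_nonneg])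

theorem theorem3p3:
  fixes \<Omega> \<omega>obs :: "(real^'n::finite) set"
    and T \<alpha> \<beta> :: real
    and S :: "(real \<Rightarrow> real \<times> real) \<Rightarrow> (real \<times> (real^'n) \<Rightarrow> real)"
    and yd :: "real \<times> (real^'n) \<Rightarrow> real"
    and tg :: "nat \<Rightarrow> real" and M :: nat
    and ubar :: "real \<Rightarrow> real \<times> real"
  assumes dom: "open \<Omega>" "connected \<Omega>" "bounded \<Omega>"
    and obs: "\<omega>obs \<subseteq> \<Omega>" "\<omega>obs \<in> sets lborel"
    and T: "T > 0"
    and grid: "M \<ge> 2" "tg 1 = 0" "tg M = T" "\<And>j. 1 \<le> j \<Longrightarrow> j < M \<Longrightarrow> tg j < tg (Suc j)"
    and S_L2: "\<And>u. u \<in> L2ctrl T \<Longrightarrow> S u \<in> L2obs T \<omega>obs"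
    and S_affine: "\<And>u v a. u \<in> L2ctrl T \<Longrightarrow> v \<in> L2ctrl T \<Longrightarrow>
         AE z in lborel. z \<in> obs_set T \<omega>obs \<longrightarrow>
           S (\<lambda>t. a *\<^sub>R u t + (1 - a) *\<^sub>R v t) z = a * S u z + (1 - a) * S v z"
    and S_bounded: "\<exists>C. \<forall>u\<in>L2ctrl T. obs_norm T \<omega>obs (lin_part S u) \<le> C * ctrl_norm T u"
    and yd: "yd \<in> L2obs T \<omega>obs"
    and \<alpha>: "\<alpha> > 0"
    and \<beta>: "\<beta> > (op_norm T \<omega>obs (lin_part S))\<^sup>2 + \<alpha>"
    and locmin: "local_min_on T (J_beta T \<omega>obs S yd \<alpha> \<beta>) (pwc tg M) ubar"
  shows "\<forall>t\<in>{0..T}. fst (ubar t) * snd (ubar t) = 0"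
  proof (rule ccontr)
  assume "\<not> (\<forall>t\<in>{0..T}. fst (ubar t) * snd (ubar t) = 0)"
  then obtain t0 where t0: "t0 \<in> {0..T}" "fst (ubar t0) * snd (ubar t0) \<noteq> 0" by blast
  have ub: "ubar \<in> pwc tg M" using locmin unfolding local_min_on_def by blast
  obtain \<epsilon> where \<epsilon>: "\<epsilon> > 0" and lm: "\<And>u. u \<in> pwc tg M \<Longrightarrow> ctrl_norm T (\<lambda>t. u t - ubar t) < \<epsilon>
      \<Longrightarrow> J_beta T \<omega>obs S yd \<alpha> \<beta> ubar \<le> J_beta T \<omega>obs S yd \<alpha> \<beta> u"
    using locmin unfolding local_min_on_def by blast
  obtain c where c: "ubar = (\<lambda>t. \<Sum>j\<in>{1..<M}. indicator {tg j<..tg (Suc j)} t *\<^sub>R c j)"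
    using ub unfolding pwc_def by auto
  have "ubar 0 = 0" using pwc_zero[of M tg ubar] grid ub by auto
  then have "t0 \<noteq> 0" using t0 by auto
  then have "t0 \<in> {0<..T}" using t0 by auto
  then obtain j where j: "j \<in> {1..<M}" "t0 \<in> {tg j<..tg (Suc j)}"
    using tg_find[of M tg T t0] grid by blast
  define I where "I = {tg j<..tg (Suc j)}"
  have ubI: "\<And>t. t \<in> I \<Longrightarrow> ubar t = c j"
    using pwc_val[of M tg ubar c j] grid c j(1) unfolding I_def by blast
  define a where "a = fst (c j)"
  define b where "b = snd (c j)"
  have ab: "a * b \<noteq> 0" using t0 ubI[of t0] j unfolding a_def b_def I_def by auto
  define \<sigma> where "\<sigma> = sgn (a*b)"
  have \<sigma>2: "\<sigma> * \<sigma> = 1" using ab unfolding \<sigma>_def by (auto simp: sgn_if)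
  define e :: "real \<times> real" where "e = (1, - \<sigma>)"
  define w where "w = (\<lambda>t. indicator I t *\<^sub>R e)"
  have w_pwc: "w \<in> pwc tg M" unfolding w_def I_def using pwc_ind[OF j(1)] .
  have "tg 1 \<le> tg j" using tg_mono[of M tg 1 j] grid j by auto
  moreover have "tg (Suc j) \<le> tg M" using tg_mono[of M tg "Suc j" M] grid j by auto
  ultimately have Isub: "I \<subseteq> {0..T}" unfolding I_def using grid by auto
  have ne: "(norm e)\<^sup>2 = 2"
  proof -
    have "(norm e)\<^sup>2 = e \<bullet> e" by (rule power2_norm_eq_inner)
    also have "\<dots> = 1 + \<sigma> * \<sigma>" unfolding e_def by (simp add: inner_Pair)
    finally show ?thesis using \<sigma>2 by simp
  qed
  have wn: "\<And>t. (norm (w t))\<^sup>2 = 2 * indicator I t"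
    unfolding w_def using ne by (auto simp: indicator_def)
  define N where "N = (LINT t:{0..T}|lborel. (norm (w t))\<^sup>2)"
  have N: "N = 2 * (tg (Suc j) - tg j)"
  proof -
    have "N = (LINT t:{0..T}|lborel. 2 * indicator I t)" unfolding N_def wn ..
    also have "\<dots> = 2 * (LINT t:{0..T}|lborel. indicator I t)" by simp
    also have "(LINT t:{0..T}|lborel. indicator I t) = integral\<^sup>L lborel (indicator I :: real \<Rightarrow> real)"
      unfolding set_lebesgue_integral_def using Isub
      by (intro Bochner_Integration.integral_cong) (auto simp: indicator_def)
    also have "\<dots> = tg (Suc j) - tg j" using grid(4)[of j] j unfolding I_def by simp
    finally show ?thesis .
  qed
  have Npos: "N > 0" using N grid(4)[of j] j by auto
  have sqN: "sqrt N > 0" using Npos by simp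
  have L2: "\<And>u. u \<in> pwc tg M \<Longrightarrow> u \<in> L2ctrl T" using pwc_L2 .
  define Ob where "Ob = obs_set T \<omega>obs"
  have Omeas: "Ob \<in> sets lborel" unfolding Ob_def using obs_meas obs(2) .
  define opn where "opn = op_norm T \<omega>obs (lin_part S)"
  define L where "L = lin_part S w"
  obtain C where C: "\<forall>u\<in>L2ctrl T. obs_norm T \<omega>obs (lin_part S u) \<le> C * ctrl_norm T u"
    using S_bounded by blast
  define X where "X = {obs_norm T \<omega>obs (lin_part S u) / ctrl_norm T u | u. u \<in> L2ctrl T \<and> ctrl_norm T u \<noteq> 0}"
  have bdd: "bdd_above X"
  proof (rule bdd_aboveI[where M=C])
    fix x assume "x \<in> X"
    then obtain u where u: "u \<in> L2ctrl T" "ctrl_norm T u \<noteq> 0" "x = obs_norm T \<omega>obs (lin_part S u) / ctrl_norm T u"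
      unfolding X_def by blast
    have "ctrl_norm T u > 0" using u(2) cn_nonneg[of T u] by linarith
    then show "x \<le> C" using C u by (simp add: divide_le_eq)
  qed
  have cw: "ctrl_norm T w = sqrt N" unfolding ctrl_norm_def N_def ..
  have "obs_norm T \<omega>obs L / sqrt N \<in> X" unfolding X_def L_def mem_Collect_eq
    by (rule exI[of _ w]) (use L2[OF w_pwc] cw sqN in auto)
  then have "obs_norm T \<omega>obs L / sqrt N \<le> opn" unfolding opn_def op_norm_def X_def[symmetric]
    by (rule cSup_upper[OF _ bdd])
  then have obsL: "obs_norm T \<omega>obs L \<le> opn * sqrt N" using sqN by (simp add: divide_le_eq)
  have LL: "(LINT x:Ob|lborel. (L x)\<^sup>2) \<le> opn\<^sup>2 * N"
  proof -
    have "(LINT x:Ob|lborel. (L x)\<^sup>2) = (obs_norm T \<omega>obs L)\<^sup>2" unfolding Ob_def on_sq ..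
    also have "\<dots> \<le> (opn * sqrt N)\<^sup>2"
      using obsL on_nonneg[of T \<omega>obs L] by (rule power_mono)
    also have "\<dots> = opn\<^sup>2 * (sqrt N)\<^sup>2" by (rule power_mult_distrib)
    also have "\<dots> = opn\<^sup>2 * N" using Npos by simp
    finally show ?thesis .
  qed
  define s where "s = min (\<bar>a\<bar>/2) (min (\<bar>b\<bar>/2) (\<epsilon> / (2 * (sqrt N + 1))))"
  have D1: "0 < sqrt N + 1" using sqN by linarith
  then have D: "2 * (sqrt N + 1) > 0" by simp
  have s0: "0 < s" unfolding s_def using ab \<epsilon> D by simp
  have sa1: "s \<le> \<bar>a\<bar>/2" "s \<le> \<bar>b\<bar>/2" unfolding s_def
    by (rule min.cobounded1) (meson min.cobounded1 min.cobounded2 order_trans)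
  have "\<bar>a\<bar> > 0" "\<bar>b\<bar> > 0" using ab by auto
  then have sa: "s < \<bar>a\<bar>" "s < \<bar>b\<bar>" using sa1 by linarith+
  have "s \<le> \<epsilon> / (2 * (sqrt N + 1))" unfolding s_def by simp
  then have "s * (2 * (sqrt N + 1)) \<le> \<epsilon>" using D by (simp add: pos_le_divide_eq)
  moreover have "sqrt N < 2 * (sqrt N + 1)" using sqN by (smt (verit))
  then have "s * sqrt N < s * (2 * (sqrt N + 1))" by (rule mult_strict_left_mono[OF _ s0])
  ultimately have sN: "s * sqrt N < \<epsilon>" by linarith
  define up where "up = (\<lambda>t. ubar t + s *\<^sub>R w t)"
  define um where "um = (\<lambda>t. ubar t - s *\<^sub>R w t)"
  define zz where "zz = (\<lambda>t. ubar t + w t)"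
  define m where "m = (\<lambda>t. (1/2::real) *\<^sub>R zz t)"
  have up_pwc: "up \<in> pwc tg M" by (rule pwc_lin'[OF ub w_pwc, of _ 1 s]) (simp add: up_def)
  have um_pwc: "um \<in> pwc tg M" by (rule pwc_lin'[OF ub w_pwc, of _ 1 "-s"]) (simp add: um_def)
  have zz_pwc: "zz \<in> pwc tg M" by (rule pwc_lin'[OF ub w_pwc, of _ 1 1]) (simp add: zz_def)
  have z0_pwc: "(\<lambda>_. 0) \<in> pwc tg M" by (rule pwc_lin'[OF ub ub, of _ 0 0]) simp
  have m_pwc: "m \<in> pwc tg M" by (rule pwc_lin'[OF zz_pwc z0_pwc, of _ "1/2" 0]) (simp add: m_def)
  have aff: "AE x in lborel. x \<in> Ob \<longrightarrow> S f x = a' * S u x + (1-a') * S v x"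
    if "u \<in> pwc tg M" "v \<in> pwc tg M" "\<And>t. f t = a' *\<^sub>R u t + (1-a') *\<^sub>R v t" for u v f a'
  proof -
    have "f = (\<lambda>t. a' *\<^sub>R u t + (1-a') *\<^sub>R v t)" using that(3) by (rule ext)
    then show ?thesis unfolding Ob_def using S_affine[OF L2[OF that(1)] L2[OF that(2)], of a'] by simp
  qed
  have A1: "AE x in lborel. x \<in> Ob \<longrightarrow> S up x = s * S zz x + (1-s) * S ubar x"
    by (rule aff[OF zz_pwc ub]) (simp add: up_def zz_def algebra_simps)
  have A2: "AE x in lborel. x \<in> Ob \<longrightarrow> S um x = (-s) * S zz x + (1-(-s)) * S ubar x"
    by (rule aff[OF zz_pwc ub]) (simp add: um_def zz_def algebra_simps)
  have A3: "AE x in lborel. x \<in> Ob \<longrightarrow> S m x = (1/2) * S zz x + (1-1/2) * S (\<lambda>_. 0) x"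
    by (rule aff[OF zz_pwc z0_pwc]) (simp add: m_def)
  have A4: "AE x in lborel. x \<in> Ob \<longrightarrow> S w x = 2 * S m x + (1-2) * S ubar x"
    by (rule aff[OF m_pwc ub]) (simp add: m_def zz_def algebra_simps)
  have AEpm: "AE x in lborel. x \<in> Ob \<longrightarrow> S up x = S ubar x + s * L x \<and> S um x = S ubar x - s * L x"
    using A1 A2 A3 A4
  proof eventually_elim
    case (elim x)
    show ?case
    proof
      assume x: "x \<in> Ob"
      have u1: "S up x = s * S zz x + (1-s) * S ubar x" using elim(1) x by blast
      have u2: "S um x = (-s) * S zz x + (1-(-s)) * S ubar x" using elim(2) x by blast
      have m3: "S m x = (1/2) * S zz x + (1-1/2) * S (\<lambda>_. 0) x" using elim(3) x by blast
      have w4: "S w x = 2 * S m x + (1-2) * S ubar x" using elim(4) x by blast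
      have w: "S w x = S zz x + S (\<lambda>_. 0) x - S ubar x" unfolding w4 m3 by (simp add: algebra_simps)
      have 1: "S up x = S ubar x + s * (S zz x - S ubar x)" unfolding u1 by (simp add: algebra_simps)
      have 2: "S um x = S ubar x - s * (S zz x - S ubar x)" unfolding u2 by (simp add: algebra_simps)
      show "S up x = S ubar x + s * L x \<and> S um x = S ubar x - s * L x"
        unfolding L_def lin_part_def w using 1 2 by simp
    qed
  qed
  have AEsq: "AE x in lborel. x \<in> Ob \<longrightarrow>
      (S up x - yd x)\<^sup>2 + (S um x - yd x)\<^sup>2 = 2 * (S ubar x - yd x)\<^sup>2 + 2 * s\<^sup>2 * (L x)\<^sup>2"
    using AEpm
  proof eventually_elim
    case (elim x)
    show ?case
    proof
      assume x: "x \<in> Ob"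
      have e1: "S up x = S ubar x + s * L x" and e2: "S um x = S ubar x - s * L x" using elim x by blast+
      show "(S up x - yd x)\<^sup>2 + (S um x - yd x)\<^sup>2 = 2 * (S ubar x - yd x)\<^sup>2 + 2 * s\<^sup>2 * (L x)\<^sup>2"
        unfolding e1 e2 by (simp add: power2_eq_square algebra_simps)
    qed
  qed
  have Sm: "S u \<in> borel_measurable lborel" if "u \<in> pwc tg M" for u
    using S_L2[OF L2[OF that]] unfolding L2obs_def by blast
  have ydm: "yd \<in> borel_measurable lborel" using yd unfolding L2obs_def by blast
  have Lm: "L \<in> borel_measurable lborel" unfolding L_def lin_part_def
    using Sm[OF w_pwc] Sm[OF z0_pwc] by (intro borel_measurable_diff)
  have iT: "set_integrable lborel Ob (\<lambda>x. (S u x - yd x)\<^sup>2)" if "u \<in> pwc tg M" for u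
    unfolding Ob_def by (rule L2obs_diff[OF S_L2[OF L2[OF that]] yd obs(2)])
  have iL: "set_integrable lborel Ob (\<lambda>x. (L x)\<^sup>2)"
    unfolding Ob_def L_def lin_part_def by (rule L2obs_diff[OF S_L2[OF L2[OF w_pwc]] S_L2[OF L2[OF z0_pwc]] obs(2)])
  have Tr: "(LINT x:Ob|lborel. (S up x - yd x)\<^sup>2) + (LINT x:Ob|lborel. (S um x - yd x)\<^sup>2)
      = 2 * (LINT x:Ob|lborel. (S ubar x - yd x)\<^sup>2) + 2 * s\<^sup>2 * (LINT x:Ob|lborel. (L x)\<^sup>2)"
  proof -
    have "(LINT x:Ob|lborel. (S up x - yd x)\<^sup>2) + (LINT x:Ob|lborel. (S um x - yd x)\<^sup>2)
        = (LINT x:Ob|lborel. (S up x - yd x)\<^sup>2 + (S um x - yd x)\<^sup>2)"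
      using iT[OF up_pwc] iT[OF um_pwc] by (simp add: set_integral_add)
    also have "\<dots> = (LINT x:Ob|lborel. 2 * (S ubar x - yd x)\<^sup>2 + 2 * s\<^sup>2 * (L x)\<^sup>2)"
      using Omeas Sm[OF up_pwc] Sm[OF um_pwc] Sm[OF ub] ydm Lm AEsq
      by (intro set_lebesgue_integral_cong_AE) (auto intro!: borel_measurable_add borel_measurable_times borel_measurable_power borel_measurable_diff)
    also have "\<dots> = 2 * (LINT x:Ob|lborel. (S ubar x - yd x)\<^sup>2) + 2 * s\<^sup>2 * (LINT x:Ob|lborel. (L x)\<^sup>2)"
      using iT[OF ub] iL by (simp add: set_integral_add)
    finally show ?thesis .
  qed
  have Cn: "(LINT t:{0..T}|lborel. (norm (up t))\<^sup>2) + (LINT t:{0..T}|lborel. (norm (um t))\<^sup>2)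
      = 2 * (LINT t:{0..T}|lborel. (norm (ubar t))\<^sup>2) + 2 * s\<^sup>2 * N"
  proof -
    have "(LINT t:{0..T}|lborel. (norm (up t))\<^sup>2) + (LINT t:{0..T}|lborel. (norm (um t))\<^sup>2)
        = (LINT t:{0..T}|lborel. (norm (up t))\<^sup>2 + (norm (um t))\<^sup>2)"
      using pwc_int(1)[OF up_pwc] pwc_int(1)[OF um_pwc] by (simp add: set_integral_add)
    also have "\<dots> = (LINT t:{0..T}|lborel. 2 * (norm (ubar t))\<^sup>2 + 2 * s\<^sup>2 * (norm (w t))\<^sup>2)"
      unfolding up_def um_def by (intro set_lebesgue_integral_cong) (auto simp: norm_par)
    also have "\<dots> = 2 * (LINT t:{0..T}|lborel. (norm (ubar t))\<^sup>2) + 2 * s\<^sup>2 * N"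
      using pwc_int(1)[OF ub, of T] pwc_int(1)[OF w_pwc, of T] unfolding N_def by (simp add: set_integral_add)
    finally show ?thesis .
  qed
  have pw: "\<bar>fst (up t) * snd (up t)\<bar> + \<bar>fst (um t) * snd (um t)\<bar>
      = 2 * \<bar>fst (ubar t) * snd (ubar t)\<bar> - s\<^sup>2 * (norm (w t))\<^sup>2" for t
  proof (cases "t \<in> I")
    case True
    have "\<bar>fst (up t) * snd (up t)\<bar> + \<bar>fst (um t) * snd (um t)\<bar>
        = \<bar>(a + s) * (b - sgn (a*b) * s)\<bar> + \<bar>(a - s) * (b + sgn (a*b) * s)\<bar>"
      using True ubI[OF True] unfolding up_def um_def w_def e_def a_def b_def \<sigma>_def
      by (simp add: algebra_simps)
    also have "\<dots> = 2 * \<bar>a * b\<bar> - 2 * s\<^sup>2" by (rule pen_alg[OF ab s0 sa])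
    finally show ?thesis using ubI[OF True] wn[of t] True unfolding a_def b_def by simp
  next
    case False
    then show ?thesis unfolding up_def um_def w_def by simp
  qed
  have Pn: "(LINT t:{0..T}|lborel. \<bar>fst (up t) * snd (up t)\<bar>) + (LINT t:{0..T}|lborel. \<bar>fst (um t) * snd (um t)\<bar>)
      = 2 * (LINT t:{0..T}|lborel. \<bar>fst (ubar t) * snd (ubar t)\<bar>) - s\<^sup>2 * N"
  proof -
    have "(LINT t:{0..T}|lborel. \<bar>fst (up t) * snd (up t)\<bar>) + (LINT t:{0..T}|lborel. \<bar>fst (um t) * snd (um t)\<bar>)
        = (LINT t:{0..T}|lborel. \<bar>fst (up t) * snd (up t)\<bar> + \<bar>fst (um t) * snd (um t)\<bar>)"
      using pwc_int(2)[OF up_pwc] pwc_int(2)[OF um_pwc] by (simp add: set_integral_add)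
    also have "\<dots> = (LINT t:{0..T}|lborel. 2 * \<bar>fst (ubar t) * snd (ubar t)\<bar> - s\<^sup>2 * (norm (w t))\<^sup>2)"
      unfolding pw ..
    also have "\<dots> = 2 * (LINT t:{0..T}|lborel. \<bar>fst (ubar t) * snd (ubar t)\<bar>) - s\<^sup>2 * N"
      using pwc_int(2)[OF ub, of T] pwc_int(1)[OF w_pwc, of T] unfolding N_def by (simp add: set_integral_diff)
    finally show ?thesis .
  qed
  let ?J = "J_beta T \<omega>obs S yd \<alpha> \<beta>"
  have Jsum: "?J up + ?J um = 2 * ?J ubar + s\<^sup>2 * ((LINT x:Ob|lborel. (L x)\<^sup>2) + \<alpha> * N - \<beta> * N)"
  proof -
    have e2: "\<alpha> * ((LINT t:{0..T}|lborel. (norm (up t))\<^sup>2) + (LINT t:{0..T}|lborel. (norm (um t))\<^sup>2))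
      = \<alpha> * (2 * (LINT t:{0..T}|lborel. (norm (ubar t))\<^sup>2) + 2 * s\<^sup>2 * N)" using Cn by simp
    have e3: "\<beta> * ((LINT t:{0..T}|lborel. \<bar>fst (up t) * snd (up t)\<bar>) + (LINT t:{0..T}|lborel. \<bar>fst (um t) * snd (um t)\<bar>))
      = \<beta> * (2 * (LINT t:{0..T}|lborel. \<bar>fst (ubar t) * snd (ubar t)\<bar>) - s\<^sup>2 * N)" using Pn by simp
    show ?thesis unfolding J_beta_def on_sq cn_sq Ob_def[symmetric]
      using Tr e2 e3 by (simp add: algebra_simps)
  qed
  have "s\<^sup>2 * ((LINT x:Ob|lborel. (L x)\<^sup>2) + \<alpha> * N - \<beta> * N) \<le> s\<^sup>2 * (N * (opn\<^sup>2 + \<alpha> - \<beta>))"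
    using LL by (intro mult_left_mono) (auto simp: algebra_simps)
  moreover have "N * (opn\<^sup>2 + \<alpha> - \<beta>) < 0" using Npos \<beta> unfolding opn_def by (simp add: mult_pos_neg)
  then have "s\<^sup>2 * (N * (opn\<^sup>2 + \<alpha> - \<beta>)) < 0" using s0 by (simp add: mult_pos_neg)
  ultimately have Jlt: "?J up + ?J um < 2 * ?J ubar" using Jsum by linarith
  have dist: "ctrl_norm T (\<lambda>t. s' *\<^sub>R w t) = \<bar>s'\<bar> * sqrt N" for s'
  proof -
    have "(LINT t:{0..T}|lborel. (norm (s' *\<^sub>R w t))\<^sup>2) = s'\<^sup>2 * N"
      unfolding N_def by (simp add: power_mult_distrib)
    then show ?thesis unfolding ctrl_norm_def by (simp add: real_sqrt_mult)
  qed
  have "ctrl_norm T (\<lambda>t. up t - ubar t) < \<epsilon>"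
    using dist[of s] sN s0 unfolding up_def by simp
  then have J1: "?J ubar \<le> ?J up" using lm[OF up_pwc] by blast
  have "(\<lambda>t. um t - ubar t) = (\<lambda>t. (-s) *\<^sub>R w t)" unfolding um_def by auto
  then have "ctrl_norm T (\<lambda>t. um t - ubar t) < \<epsilon>"
    using dist[of "-s"] sN s0 by simp
  then have J2: "?J ubar \<le> ?J um" using lm[OF um_pwc] by blast
  show False using J1 J2 Jlt by linarith
qed

end
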